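(* Let $p\ge 4$ and let $I$ consist of one of the configurations $(3,3,1)$ or $(3,2,2)$ (numbers of chips of the three colors) together with $2p-7$ additional colored chips all of a single color, and no jokers or dominoes. Then there is a sequence of exactly $5p-12$ exchanges taking $I$ to a configuration with $p$ dominoes.
   Context: Game model: a configuration is a tuple $(a,b,c,x,d)$ of nonnegative integers: $a,b,c$ colored chips of three colors, $x$ jokers, $d$ dominoes. Exchanges: Rule 1: remove three chips, consisting of some number $j\in\{0,1,2,3\}$ of jokers together with $3-j$ colored chips of pairwise distinct colors, and add one domino and one joker. Rule 2: if $d\ge 3$, remove three dominoes and add seven jokers. *)

theory Defs
  imports Main
begin

text \<open>A configuration (a,b,c,x,d): a,b,c colored chips of the three colors,
x jokers, d dominoes.\<close>
type_synonym config = "nat \<times> nat \<times> nat \<times> nat \<times> nat"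

text \<open>Rule 1: remove ea, eb, ec \<in> {0,1} chips of the three colors (so the removed
colored chips have pairwise distinct colors) and j jokers with ea+eb+ec+j = 3;
add one domino and one joker.\<close>
definition rule1 :: "config \<Rightarrow> config \<Rightarrow> bool" where
  "rule1 C C' \<longleftrightarrow> (case C of (a,b,c,x,d) \<Rightarrow>
     (\<exists>ea eb ec j::nat. ea \<le> 1 \<and> eb \<le> 1 \<and> ec \<le> 1 \<and> j \<le> 3 \<and> ea + eb + ec + j = 3 \<and>
        ea \<le> a \<and> eb \<le> b \<and> ec \<le> c \<and> j \<le> x \<and>
        C' = (a - ea, b - eb, c - ec, x - j + 1, d + 1)))"

definition rule2 :: "config \<Rightarrow> config \<Rightarrow> bool" where
  "rule2 C C' \<longleftrightarrow> (case C of (a,b,c,x,d) \<Rightarrow>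
     3 \<le> d \<and> C' = (a, b, c, x + 7, d - 3))"

definition exchange :: "config \<Rightarrow> config \<Rightarrow> bool" where
  "exchange C C' \<longleftrightarrow> rule1 C C' \<or> rule2 C C'"

definition dominoes :: "config \<Rightarrow> nat" where
  "dominoes C = (case C of (a,b,c,x,d) \<Rightarrow> d)"

definition add_color :: "nat \<Rightarrow> nat \<Rightarrow> nat \<times> nat \<times> nat \<Rightarrow> nat \<times> nat \<times> nat" where
  "add_color i n t = (case t of (a,b,c) \<Rightarrow>
     if i = 0 then (a + n, b, c) else if i = 1 then (a, b + n, c) else (a, b, c + n))"

end

theory Submission
  imports Defs
begin

lemma r1I: "ea \<le> 1 \<Longrightarrow> eb \<le> 1 \<Longrightarrow> ec \<le> 1 \<Longrightarrow> j \<le> 3 \<Longrightarrow> ea + eb + ec + j = 3 \<Longrightarrow>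
  ea \<le> a \<Longrightarrow> eb \<le> b \<Longrightarrow> ec \<le> c \<Longrightarrow> j \<le> x \<Longrightarrow>
  C' = (a - ea, b - eb, c - ec, x - j + 1, d + 1) \<Longrightarrow> exchange (a,b,c,x,d) C'"
  unfolding exchange_def rule1_def by blast

lemma r2I: "3 \<le> d \<Longrightarrow> C' = (a, b, c, x + 7, d - 3) \<Longrightarrow> exchange (a,b,c,x,d) C'"
  unfolding exchange_def rule2_def by simp

lemma pow5: "(R ^^ 5) = (R ^^ Suc (Suc (Suc (Suc (Suc 0)))))"
  by (simp add: numeral_eq_Suc)

lemma pow3: "(R ^^ 3) = (R ^^ Suc (Suc (Suc 0)))"
  by (simp add: numeral_eq_Suc)

lemma one0: "1 \<le> x \<Longrightarrow> 1 \<le> a \<Longrightarrow> 3 \<le> d \<Longrightarrow> (exchange ^^ 5) (a,b,c,x,d) (a-1,b,c,x,d+1)"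
  unfolding pow5
  apply (rule relpowp_Suc_I2[where y="(a,b,c,x+7,d-3)"])
  apply (rule r2I; simp)
  apply (rule relpowp_Suc_I2[where y="(a-1,b,c,x+6,d-2)"])
  apply (rule r1I[where ea=1 and eb=0 and ec=0 and j=2]; simp)
  apply (rule relpowp_Suc_I2[where y="(a-1,b,c,x+4,d-1)"])
  apply (rule r1I[where ea=0 and eb=0 and ec=0 and j=3]; simp)
  apply (rule relpowp_Suc_I2[where y="(a-1,b,c,x+2,d)"])
  apply (rule r1I[where ea=0 and eb=0 and ec=0 and j=3]; simp)
  apply (rule relpowp_Suc_I2[where y="(a-1,b,c,x,d+1)"])
  apply (rule r1I[where ea=0 and eb=0 and ec=0 and j=3]; simp)
  apply simp
  done

lemma one1: "1 \<le> x \<Longrightarrow> 1 \<le> b \<Longrightarrow> 3 \<le> d \<Longrightarrow> (exchange ^^ 5) (a,b,c,x,d) (a,b-1,c,x,d+1)"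
  unfolding pow5
  apply (rule relpowp_Suc_I2[where y="(a,b,c,x+7,d-3)"])
  apply (rule r2I; simp)
  apply (rule relpowp_Suc_I2[where y="(a,b-1,c,x+6,d-2)"])
  apply (rule r1I[where ea=0 and eb=1 and ec=0 and j=2]; simp)
  apply (rule relpowp_Suc_I2[where y="(a,b-1,c,x+4,d-1)"])
  apply (rule r1I[where ea=0 and eb=0 and ec=0 and j=3]; simp)
  apply (rule relpowp_Suc_I2[where y="(a,b-1,c,x+2,d)"])
  apply (rule r1I[where ea=0 and eb=0 and ec=0 and j=3]; simp)
  apply (rule relpowp_Suc_I2[where y="(a,b-1,c,x,d+1)"])
  apply (rule r1I[where ea=0 and eb=0 and ec=0 and j=3]; simp)
  apply simp
  done

lemma one2: "1 \<le> x \<Longrightarrow> 1 \<le> c \<Longrightarrow> 3 \<le> d \<Longrightarrow> (exchange ^^ 5) (a,b,c,x,d) (a,b,c-1,x,d+1)"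
  unfolding pow5
  apply (rule relpowp_Suc_I2[where y="(a,b,c,x+7,d-3)"])
  apply (rule r2I; simp)
  apply (rule relpowp_Suc_I2[where y="(a,b,c-1,x+6,d-2)"])
  apply (rule r1I[where ea=0 and eb=0 and ec=1 and j=2]; simp)
  apply (rule relpowp_Suc_I2[where y="(a,b,c-1,x+4,d-1)"])
  apply (rule r1I[where ea=0 and eb=0 and ec=0 and j=3]; simp)
  apply (rule relpowp_Suc_I2[where y="(a,b,c-1,x+2,d)"])
  apply (rule r1I[where ea=0 and eb=0 and ec=0 and j=3]; simp)
  apply (rule relpowp_Suc_I2[where y="(a,b,c-1,x,d+1)"])
  apply (rule r1I[where ea=0 and eb=0 and ec=0 and j=3]; simp)
  apply simp
  done

lemma cyc0: "1 \<le> x \<Longrightarrow> n \<le> a \<Longrightarrow> 3 \<le> d \<Longrightarrow> (exchange ^^ (5*n)) (a,b,c,x,d) (a-n,b,c,x,d+n)"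
proof (induction n arbitrary: a d)
  case 0 then show ?case by simp
next
  case (Suc n)
  have "(exchange ^^ (5 + 5*n)) (a,b,c,x,d) (a-1-n,b,c,x,d+1+n)"
    unfolding relpowp_add using one0[where a=a and d=d and b=b and c=c and x=x] Suc.IH[of "a-1" "d+1"] Suc.prems by (auto intro!: relcomppI)
  then show ?case by (simp add: add.commute)
qed

lemma cyc1: "1 \<le> x \<Longrightarrow> n \<le> b \<Longrightarrow> 3 \<le> d \<Longrightarrow> (exchange ^^ (5*n)) (a,b,c,x,d) (a,b-n,c,x,d+n)"
proof (induction n arbitrary: b d)
  case 0 then show ?case by simp
next
  case (Suc n)
  have "(exchange ^^ (5 + 5*n)) (a,b,c,x,d) (a,b-1-n,c,x,d+1+n)"
    unfolding relpowp_add using one1[where a=a and d=d and b=b and c=c and x=x] Suc.IH[of "b-1" "d+1"] Suc.prems by (auto intro!: relcomppI)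
  then show ?case by (simp add: add.commute)
qed

lemma cyc2: "1 \<le> x \<Longrightarrow> n \<le> c \<Longrightarrow> 3 \<le> d \<Longrightarrow> (exchange ^^ (5*n)) (a,b,c,x,d) (a,b,c-n,x,d+n)"
proof (induction n arbitrary: c d)
  case 0 then show ?case by simp
next
  case (Suc n)
  have "(exchange ^^ (5 + 5*n)) (a,b,c,x,d) (a,b,c-1-n,x,d+1+n)"
    unfolding relpowp_add using one2[where a=a and d=d and b=b and c=c and x=x] Suc.IH[of "c-1" "d+1"] Suc.prems by (auto intro!: relcomppI)
  then show ?case by (simp add: add.commute)
qed

lemma preA: "(exchange ^^ 3) (3+e0,3+e1,1+e2,0,0) (e0,e1,e2,1,3)"
  unfolding pow3
  apply (rule relpowp_Suc_I2[where y="(2+e0,2+e1,e2,1,1)"])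
  apply (rule r1I[where ea=1 and eb=1 and ec=1 and j=0]; simp)
  apply (rule relpowp_Suc_I2[where y="(1+e0,1+e1,e2,1,2)"])
  apply (rule r1I[where ea=1 and eb=1 and ec=0 and j=1]; simp)
  apply (rule relpowp_Suc_I2[where y="(e0,e1,e2,1,3)"])
  apply (rule r1I[where ea=1 and eb=1 and ec=0 and j=1]; simp)
  apply simp
  done

lemma preB: "(exchange ^^ 3) (3+e0,2+e1,2+e2,0,0) (e0,e1,e2,1,3)"
  unfolding pow3
  apply (rule relpowp_Suc_I2[where y="(2+e0,1+e1,1+e2,1,1)"])
  apply (rule r1I[where ea=1 and eb=1 and ec=1 and j=0]; simp)
  apply (rule relpowp_Suc_I2[where y="(1+e0,e1,1+e2,1,2)"])
  apply (rule r1I[where ea=1 and eb=1 and ec=0 and j=1]; simp)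
  apply (rule relpowp_Suc_I2[where y="(e0,e1,e2,1,3)"])
  apply (rule r1I[where ea=1 and eb=0 and ec=1 and j=1]; simp)
  apply simp
  done

lemma pre: "base = (3,3,1) \<or> base = (3,2,2) \<Longrightarrow> (case base of (a,b,c) \<Rightarrow> (exchange ^^ 3) (a+e0,b+e1,c+e2,0,0) (e0,e1,e2,1,3))"
  using preA[of e0 e1 e2] preB[of e0 e1 e2] by (auto simp: add.commute)

theorem mainTheorem6:
  fixes p i :: nat and base :: "nat \<times> nat \<times> nat"
  assumes "p \<ge> 4"
    and "base = (3,3,1) \<or> base = (3,2,2)"
    and "i < 3"
  shows "\<exists>C'. (exchange ^^ (5 * p - 12))
                 (case add_color i (2 * p - 7) base of (a,b,c) \<Rightarrow> (a,b,c,0,0)) C'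
             \<and> dominoes C' = p"
proof -
  define E where "E = 2*p - 7"
  have n: "5*p - 12 = 3 + 5*(p-3)" and le: "p - 3 \<le> E" and d: "3 + (p-3) = p"
    using assms(1) unfolding E_def by auto
  obtain a b c where bs: "base = (a,b,c)" by (cases base) auto
  have pr: "\<And>e0 e1 e2. (exchange ^^ 3) (a+e0,b+e1,c+e2,0,0) (e0,e1,e2,1,3)"
    using pre[OF assms(2)] bs by simp
  consider "i = 0" | "i = 1" | "i = 2" using assms(3) by linarith
  then show ?thesis
  proof cases
    case 1
    have "(exchange ^^ (3 + 5*(p-3))) (a+E,b,c,0,0) (E-(p-3),0,0,1,3+(p-3))"
      unfolding relpowp_add using pr[of E 0 0] cyc0[OF _ le, where x=1 and d=3 and b=0 and c=0] by (auto intro!: relcomppI)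
    then show ?thesis using 1 bs n d unfolding E_def add_color_def dominoes_def
      by (intro exI[of _ "(E-(p-3),0,0,1,p)"]) (simp add: E_def)
  next
    case 2
    have "(exchange ^^ (3 + 5*(p-3))) (a,b+E,c,0,0) (0,E-(p-3),0,1,3+(p-3))"
      unfolding relpowp_add using pr[of 0 E 0] cyc1[OF _ le, where x=1 and d=3 and a=0 and c=0] by (auto intro!: relcomppI)
    then show ?thesis using 2 bs n d unfolding E_def add_color_def dominoes_def
      by (intro exI[of _ "(0,E-(p-3),0,1,p)"]) (simp add: E_def)
  next
    case 3
    have "(exchange ^^ (3 + 5*(p-3))) (a,b,c+E,0,0) (0,0,E-(p-3),1,3+(p-3))"
      unfolding relpowp_add using pr[of 0 0 E] cyc2[OF _ le, where x=1 and d=3 and b=0 and a=0] by (auto intro!: relcomppI)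
    then show ?thesis using 3 bs n d unfolding E_def add_color_def dominoes_def
      by (intro exI[of _ "(0,0,E-(p-3),1,p)"]) (simp add: E_def)
  qed
qed

end
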